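(* Let $\bm M=\bm M^\star+\bm E\in\mathbb R^{n_1\times n_2}$, with SVDs $\bm M^\star=\sum_{i=1}^{n_1}\sigma_i^\star\bm u_i^\star\bm v_i^{\star\top}$ and $\bm M=\sum_{i=1}^{n_1}\sigma_i\bm u_i\bm v_i^\top$, where $\sigma_1^\star\ge\dots\ge\sigma_{n_1}^\star\ge0$ and $\sigma_1\ge\dots\ge\sigma_{n_1}\ge0$ are the singular values, $\bm u_i^\star,\bm u_i$ the corresponding left singular vectors and $\bm v_i^\star,\bm v_i$ the corresponding right singular vectors. Let $\bm U^\star=[\bm u_1^\star,\dots,\bm u_r^\star]$ and $\bm U=[\bm u_1,\dots,\bm u_r]$ be the rank-$r$ leading left singular subspaces of $\bm M^\star$ and $\bm M$. If $\sigma_r^\star-\sigma_{r+1}^\star>2\|\bm E\|$, then $$\big\|(\bm U\bm U^\top-\bm U^\star\bm U^{\star\top})\bm M^\star\big\|\le\frac{4\sigma_r^\star\|\bm E\|}{\sigma_r^\star-\sigma_{r+1}^\star}.$$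
   Context: $\|\cdot\|$ denotes the spectral norm. *)

theory Defs
  imports "HOL-Analysis.Analysis"
begin

definition outer :: "real^'m \<Rightarrow> real^'n \<Rightarrow> real^'n^'m" where
  "outer u v = (\<chi> i j. u $ i * v $ j)"

definition spec_norm :: "real^'n^'m \<Rightarrow> real" where
  "spec_norm A = onorm (\<lambda>x. A *v x)"

text \<open>SVD of an n1 x n2 matrix A (n1 = CARD('m)), indices 0-based:
  A = sum_{i<n1} sigma_i u_i v_i^T with orthonormal u_0..u_{n1-1},
  orthonormal v_0..v_{n1-1}, sigma nonincreasing and nonnegative;
  by convention sigma_i = 0 for i >= n1.\<close>
definition is_svd :: "real^'n^'m \<Rightarrow> (nat \<Rightarrow> real) \<Rightarrow> (nat \<Rightarrow> real^'m) \<Rightarrow> (nat \<Rightarrow> real^'n) \<Rightarrow> bool" where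
  "is_svd A \<sigma> u v \<longleftrightarrow>
     (\<forall>i<CARD('m). \<forall>j<CARD('m). u i \<bullet> u j = (if i = j then 1 else 0)) \<and>
     (\<forall>i<CARD('m). \<forall>j<CARD('m). v i \<bullet> v j = (if i = j then 1 else 0)) \<and>
     (\<forall>i j. i \<le> j \<longrightarrow> \<sigma> j \<le> \<sigma> i) \<and>
     (\<forall>i. 0 \<le> \<sigma> i) \<and>
     (\<forall>i. CARD('m) \<le> i \<longrightarrow> \<sigma> i = 0) \<and>
     A = (\<Sum>i<CARD('m). \<sigma> i *\<^sub>R outer (u i) (v i))"

definition proj :: "(nat \<Rightarrow> real^'m) \<Rightarrow> nat \<Rightarrow> real^'m^'m" where
  "proj u r = (\<Sum>i<r. outer (u i) (u i))"

end

theory Submission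
  imports Defs
begin

lemma outer_mv: "outer a b *v x = (b \<bullet> x) *\<^sub>R a"
  by (simp add: outer_def vec_eq_iff matrix_vector_mult_def inner_vec_def sum_distrib_left mult_ac)

lemma sum_mv: "finite S \<Longrightarrow> (sum f S) *v x = (\<Sum>i\<in>S. f i *v x)"
  by (induction S rule: finite_induct) (auto simp: matrix_vector_mult_add_rdistrib)

lemma scaleR_mv: "(c *\<^sub>R A) *v x = c *\<^sub>R (A *v x)" for A :: "real^'n^'m"
  by (simp add: scaleR_matrix_vector_assoc)

definition orthon :: "nat \<Rightarrow> (nat \<Rightarrow> 'a::real_inner) \<Rightarrow> bool" where
  "orthon m p \<longleftrightarrow> (\<forall>i<m. \<forall>j<m. p i \<bullet> p j = (if i = j then 1 else 0))"

definition prj :: "(nat \<Rightarrow> 'a::real_inner) \<Rightarrow> nat set \<Rightarrow> 'a \<Rightarrow> 'a" where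
  "prj p I x = (\<Sum>i\<in>I. (p i \<bullet> x) *\<^sub>R p i)"

lemma coef:
  assumes "orthon m p" "I \<subseteq> {..<m}" "k < m"
  shows "p k \<bullet> (\<Sum>i\<in>I. c i *\<^sub>R p i) = (if k \<in> I then c k else 0)"
proof -
  have fin: "finite I" using assms(2) finite_subset by blast
  have "p k \<bullet> (\<Sum>i\<in>I. c i *\<^sub>R p i) = (\<Sum>i\<in>I. c i * (p k \<bullet> p i))"
    by (simp add: inner_sum_right)
  also have "\<dots> = (\<Sum>i\<in>I. if i = k then c i else 0)"
    using assms unfolding orthon_def by (intro sum.cong) auto
  also have "\<dots> = (if k \<in> I then c k else 0)"
    using fin by (simp add: sum.delta')
  finally show ?thesis .
qed

lemma inner_sums:
  assumes "orthon m p" "I \<subseteq> {..<m}"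
  shows "(\<Sum>i\<in>I. c i *\<^sub>R p i) \<bullet> (\<Sum>i\<in>I. d i *\<^sub>R p i) = (\<Sum>i\<in>I. c i * d i)"
proof -
  have "(\<Sum>i\<in>I. c i *\<^sub>R p i) \<bullet> (\<Sum>i\<in>I. d i *\<^sub>R p i)
     = (\<Sum>i\<in>I. c i * (p i \<bullet> (\<Sum>j\<in>I. d j *\<^sub>R p j)))"
    by (simp add: inner_sum_left)
  also have "\<dots> = (\<Sum>i\<in>I. c i * d i)"
    using assms by (intro sum.cong) (auto simp: coef[OF assms])
  finally show ?thesis .
qed

lemma norm_sum_sq:
  assumes "orthon m p" "I \<subseteq> {..<m}"
  shows "(norm (\<Sum>i\<in>I. c i *\<^sub>R p i))\<^sup>2 = (\<Sum>i\<in>I. (c i)\<^sup>2)"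
  using inner_sums[OF assms, of c c] power2_norm_eq_inner[of "\<Sum>i\<in>I. c i *\<^sub>R p i"]
  by (simp add: power2_eq_square)

lemma prj_coef:
  assumes "orthon m p" "I \<subseteq> {..<m}" "k < m"
  shows "p k \<bullet> prj p I x = (if k \<in> I then p k \<bullet> x else 0)"
  unfolding prj_def using coef[OF assms] .

lemma bessel:
  assumes "orthon m p" "I \<subseteq> {..<m}"
  shows "(\<Sum>i\<in>I. (p i \<bullet> x)\<^sup>2) \<le> (norm x)\<^sup>2"
proof -
  let ?y = "prj p I x"
  let ?S = "\<Sum>i\<in>I. (p i \<bullet> x)\<^sup>2"
  have yy: "?y \<bullet> ?y = ?S"
    using inner_sums[OF assms, of "\<lambda>i. p i \<bullet> x" "\<lambda>i. p i \<bullet> x"]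
    by (simp add: prj_def power2_eq_square)
  have yx: "?y \<bullet> x = ?S"
    by (simp add: prj_def inner_sum_left power2_eq_square)
  have "0 \<le> (x - ?y) \<bullet> (x - ?y)" by simp
  also have "\<dots> = x \<bullet> x - 2 * (?y \<bullet> x) + ?y \<bullet> ?y"
    by (simp add: inner_diff_left inner_diff_right inner_commute)
  finally show ?thesis using yy yx by (simp add: power2_norm_eq_inner)
qed

lemma prj_norm_sq:
  assumes "orthon m p" "I \<subseteq> {..<m}"
  shows "(norm (prj p I x))\<^sup>2 = (\<Sum>i\<in>I. (p i \<bullet> x)\<^sup>2)"
  unfolding prj_def by (rule norm_sum_sq[OF assms])

lemma prj_norm:
  assumes "orthon m p" "I \<subseteq> {..<m}"
  shows "norm (prj p I x) \<le> norm x"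
  using bessel[OF assms, of x] prj_norm_sq[OF assms, of x]
  by (simp add: power2_le_imp_le)

lemma prj_sa: "prj p I x \<bullet> y = x \<bullet> prj p I y"
  by (simp add: prj_def inner_sum_left inner_sum_right inner_commute mult.commute)

lemma prj_bl: "bounded_linear (prj p I)"
  unfolding prj_def
  by (intro bounded_linear_sum bounded_linear_compose[OF bounded_linear_scaleR_left] bounded_linear_inner_right)

lemma prj_fix:
  assumes "orthon m p" "I \<subseteq> {..<m}"
  shows "prj p I (\<Sum>i\<in>I. c i *\<^sub>R p i) = (\<Sum>i\<in>I. c i *\<^sub>R p i)"
  unfolding prj_def using assms by (intro sum.cong) (auto simp: coef[OF assms])

lemma prj_idem:
  assumes "orthon m p" "I \<subseteq> {..<m}"
  shows "prj p I (prj p I x) = prj p I x"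
  unfolding prj_def[of p I x] by (rule prj_fix[OF assms])

definition svdl :: "('a::real_inner \<Rightarrow> 'b::real_inner) \<Rightarrow> nat \<Rightarrow> (nat \<Rightarrow> real) \<Rightarrow> (nat \<Rightarrow> 'a) \<Rightarrow> (nat \<Rightarrow> 'b) \<Rightarrow> bool" where
  "svdl F m \<sigma> p q \<longleftrightarrow> orthon m p \<and> orthon m q \<and> (\<forall>i j. i \<le> j \<longrightarrow> \<sigma> j \<le> \<sigma> i) \<and> (\<forall>i. 0 \<le> \<sigma> i)
     \<and> (\<forall>x. F x = (\<Sum>i<m. (\<sigma> i * (p i \<bullet> x)) *\<^sub>R q i))"

lemma svdlD:
  assumes "svdl F m \<sigma> p q"
  shows "orthon m p" "orthon m q" "\<And>i j. i \<le> j \<Longrightarrow> \<sigma> j \<le> \<sigma> i" "\<And>i. 0 \<le> \<sigma> i"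
    "\<And>x. F x = (\<Sum>i<m. (\<sigma> i * (p i \<bullet> x)) *\<^sub>R q i)"
  using assms unfolding svdl_def by auto

lemma F_prj:
  assumes "svdl F m \<sigma> p q" "I \<subseteq> {..<m}"
  shows "F (prj p I x) = (\<Sum>i\<in>I. (\<sigma> i * (p i \<bullet> x)) *\<^sub>R q i)"
proof -
  have "F (prj p I x) = (\<Sum>i<m. (\<sigma> i * (p i \<bullet> prj p I x)) *\<^sub>R q i)"
    by (rule svdlD(5)[OF assms(1)])
  also have "\<dots> = (\<Sum>i<m. if i \<in> I then (\<sigma> i * (p i \<bullet> x)) *\<^sub>R q i else 0)"
    by (intro sum.cong) (auto simp: prj_coef[OF svdlD(1)[OF assms(1)] assms(2)])
  also have "\<dots> = (\<Sum>i\<in>{..<m} \<inter> I. (\<sigma> i * (p i \<bullet> x)) *\<^sub>R q i)"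
    by (simp add: sum.inter_restrict)
  also have "{..<m} \<inter> I = I" using assms(2) by blast
  finally show ?thesis .
qed

lemma F_full:
  assumes "svdl F m \<sigma> p q"
  shows "F x = F (prj p {..<m} x)"
  using F_prj[OF assms, of "{..<m}" x] svdlD(5)[OF assms] by simp

lemma prj_F:
  assumes "svdl F m \<sigma> p q" "I \<subseteq> {..<m}"
  shows "prj q I (F x) = (\<Sum>i\<in>I. (\<sigma> i * (p i \<bullet> x)) *\<^sub>R q i)"
proof -
  have "prj q I (F x) = prj q I (\<Sum>i<m. (\<sigma> i * (p i \<bullet> x)) *\<^sub>R q i)"
    using svdlD(5)[OF assms(1)] by simp
  also have "\<dots> = (\<Sum>i\<in>I. (q i \<bullet> (\<Sum>i<m. (\<sigma> i * (p i \<bullet> x)) *\<^sub>R q i)) *\<^sub>R q i)"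
    by (simp add: prj_def)
  also have "\<dots> = (\<Sum>i\<in>I. (\<sigma> i * (p i \<bullet> x)) *\<^sub>R q i)"
    using assms(2) by (intro sum.cong) (auto simp: coef[OF svdlD(2)[OF assms(1)]])
  finally show ?thesis .
qed

lemma F_prj_comm:
  assumes "svdl F m \<sigma> p q" "I \<subseteq> {..<m}"
  shows "F (prj p I x) = prj q I (F x)"
  using F_prj[OF assms] prj_F[OF assms] by simp

lemma F_upper:
  assumes "svdl F m \<sigma> p q" "I \<subseteq> {..<m}" "\<And>i. i \<in> I \<Longrightarrow> \<sigma> i \<le> t"
  shows "norm (F (prj p I x)) \<le> t * norm (prj p I x)"
proof (cases "I = {}")
  case True
  have "F (prj p I x) = 0" using F_prj[OF assms(1,2), of x] unfolding True sum.empty .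
  moreover have "prj p I x = 0" using True by (simp add: prj_def)
  ultimately show ?thesis by simp
next
  case False
  then obtain i0 where "i0 \<in> I" by blast
  then have t0: "0 \<le> t"
    using assms(3) svdlD(4)[OF assms(1)] order.trans by blast
  have "(norm (F (prj p I x)))\<^sup>2 = (\<Sum>i\<in>I. (\<sigma> i * (p i \<bullet> x))\<^sup>2)"
    unfolding F_prj[OF assms(1,2)] by (rule norm_sum_sq[OF svdlD(2)[OF assms(1)] assms(2)])
  also have "\<dots> \<le> (\<Sum>i\<in>I. t\<^sup>2 * (p i \<bullet> x)\<^sup>2)"
  proof (rule sum_mono)
    fix i assume "i \<in> I"
    then have "\<sigma> i \<le> t" "0 \<le> \<sigma> i" using assms(3) svdlD(4)[OF assms(1)] by auto
    then have "(\<sigma> i)\<^sup>2 \<le> t\<^sup>2" by (rule power_mono)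
    then have "(\<sigma> i)\<^sup>2 * (p i \<bullet> x)\<^sup>2 \<le> t\<^sup>2 * (p i \<bullet> x)\<^sup>2"
      by (rule mult_right_mono) simp
    then show "(\<sigma> i * (p i \<bullet> x))\<^sup>2 \<le> t\<^sup>2 * (p i \<bullet> x)\<^sup>2"
      by (simp only: power_mult_distrib)
  qed
  also have "\<dots> = t\<^sup>2 * (norm (prj p I x))\<^sup>2"
    unfolding prj_norm_sq[OF svdlD(1)[OF assms(1)] assms(2)] by (rule sum_distrib_left[symmetric])
  also have "\<dots> = (t * norm (prj p I x))\<^sup>2" by (rule power_mult_distrib[symmetric])
  finally have *: "(norm (F (prj p I x)))\<^sup>2 \<le> (t * norm (prj p I x))\<^sup>2" .
  show ?thesis using t0 by (intro power2_le_imp_le[OF *] mult_nonneg_nonneg) simp_all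
qed

lemma F_lower:
  assumes "svdl F m \<sigma> p q" "I \<subseteq> {..<m}" "\<And>i. i \<in> I \<Longrightarrow> s \<le> \<sigma> i" "0 \<le> s"
  shows "s * norm (prj p I x) \<le> norm (F (prj p I x))"
proof -
  have "(s * norm (prj p I x))\<^sup>2 = s\<^sup>2 * (norm (prj p I x))\<^sup>2" by (rule power_mult_distrib)
  also have "\<dots> = (\<Sum>i\<in>I. s\<^sup>2 * (p i \<bullet> x)\<^sup>2)"
    unfolding prj_norm_sq[OF svdlD(1)[OF assms(1)] assms(2)] by (rule sum_distrib_left)
  also have "\<dots> \<le> (\<Sum>i\<in>I. (\<sigma> i * (p i \<bullet> x))\<^sup>2)"
  proof (rule sum_mono)
    fix i assume "i \<in> I"
    then have "s \<le> \<sigma> i" using assms(3) by auto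
    then have "s\<^sup>2 \<le> (\<sigma> i)\<^sup>2" using assms(4) by (rule power_mono)
    then have "s\<^sup>2 * (p i \<bullet> x)\<^sup>2 \<le> (\<sigma> i)\<^sup>2 * (p i \<bullet> x)\<^sup>2"
      by (rule mult_right_mono) simp
    then show "s\<^sup>2 * (p i \<bullet> x)\<^sup>2 \<le> (\<sigma> i * (p i \<bullet> x))\<^sup>2"
      by (simp only: power_mult_distrib)
  qed
  also have "\<dots> = (norm (F (prj p I x)))\<^sup>2"
    unfolding F_prj[OF assms(1,2)] by (rule norm_sum_sq[OF svdlD(2)[OF assms(1)] assms(2), symmetric])
  finally have "(s * norm (prj p I x))\<^sup>2 \<le> (norm (F (prj p I x)))\<^sup>2" .
  then show ?thesis by (rule power2_le_imp_le) simp
qed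

lemma half:
  fixes F F' :: "'a::real_inner \<Rightarrow> 'b::real_inner"
  assumes F: "svdl F m \<sigma> p q" and F': "svdl F' m \<sigma>' p' q'"
    and E: "\<And>x. norm (F x - F' x) \<le> e * norm x" and e: "0 \<le> e"
    and r: "1 \<le> r" "r \<le> m"
  shows "\<sigma> (r-1) * norm (prj p {..<r} (prj p' {r..<m} z))
     \<le> (onorm (\<lambda>x. prj q {..<r} (prj q' {r..<m} x)) * \<sigma>' r + e) * norm z"
proof -
  define T where "T = {..<r}"
  define B where "B = {r..<m}"
  have T: "T \<subseteq> {..<m}" using r unfolding T_def by auto
  have B: "B \<subseteq> {..<m}" unfolding B_def by auto
  define w where "w = prj p' B z"
  define b where "b = onorm (\<lambda>x. prj q T (prj q' B x))"
  have bl: "bounded_linear (\<lambda>x. prj q T (prj q' B x))"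
    by (rule bounded_linear_compose[OF prj_bl prj_bl])
  have b0: "0 \<le> b" unfolding b_def by (rule onorm_pos_le[OF bl])
  have s0: "0 \<le> \<sigma> (r-1)" by (rule svdlD(4)[OF F])
  have t0: "0 \<le> \<sigma>' r" by (rule svdlD(4)[OF F'])
  have "\<sigma> (r-1) * norm (prj p T w) \<le> norm (F (prj p T w))"
  proof (rule F_lower[OF F T _ s0])
    fix i assume "i \<in> T" then have "i \<le> r - 1" unfolding T_def by auto
    then show "\<sigma> (r-1) \<le> \<sigma> i" by (rule svdlD(3)[OF F])
  qed
  also have "F (prj p T w) = prj q T (F w)" by (rule F_prj_comm[OF F T])
  also have "\<dots> = prj q T (F' w) + prj q T (F w - F' w)"
    using linear_add[OF bounded_linear.linear[OF prj_bl], of q T "F' w" "F w - F' w"] by simp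
  finally have 1: "\<sigma> (r-1) * norm (prj p T w) \<le> norm (prj q T (F' w) + prj q T (F w - F' w))" .
  have w'eq: "F' w = prj q' B (F' w)"
    unfolding w_def F_prj_comm[OF F' B] prj_idem[OF svdlD(2)[OF F'] B] ..
  have nw: "norm w \<le> norm z" unfolding w_def by (rule prj_norm[OF svdlD(1)[OF F'] B])
  have "norm (F' w) \<le> \<sigma>' r * norm w"
    unfolding w_def
  proof (rule F_upper[OF F' B])
    fix i assume "i \<in> B" then have "r \<le> i" unfolding B_def by auto
    then show "\<sigma>' i \<le> \<sigma>' r" by (rule svdlD(3)[OF F'])
  qed
  also have "\<dots> \<le> \<sigma>' r * norm z" using nw t0 by (rule mult_left_mono)
  finally have nw': "norm (F' w) \<le> \<sigma>' r * norm z" .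
  have "norm (prj q T (F' w)) = norm (prj q T (prj q' B (F' w)))" using w'eq by simp
  also have "\<dots> \<le> b * norm (F' w)" unfolding b_def by (rule onorm[OF bl])
  also have "\<dots> \<le> b * (\<sigma>' r * norm z)" using nw' b0 by (rule mult_left_mono)
  finally have 2: "norm (prj q T (F' w)) \<le> b * (\<sigma>' r * norm z)" .
  have "norm (prj q T (F w - F' w)) \<le> norm (F w - F' w)" by (rule prj_norm[OF svdlD(2)[OF F] T])
  also have "\<dots> \<le> e * norm w" by (rule E)
  also have "\<dots> \<le> e * norm z" using nw e by (rule mult_left_mono)
  finally have 3: "norm (prj q T (F w - F' w)) \<le> e * norm z" .
  have "\<sigma> (r-1) * norm (prj p T w) \<le> b * (\<sigma>' r * norm z) + e * norm z"
    using 1 2 3 norm_triangle_ineq[of "prj q T (F' w)" "prj q T (F w - F' w)"] by linarith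
  then show ?thesis unfolding w_def b_def T_def B_def by (simp add: algebra_simps)
qed

lemma sintheta:
  fixes A A' :: "'a::real_inner \<Rightarrow> 'b::real_inner" and At At' :: "'b \<Rightarrow> 'a"
  assumes A: "svdl A m \<sigma> v u" and At: "svdl At m \<sigma> u v"
    and A': "svdl A' m \<sigma>' v' u'" and At': "svdl At' m \<sigma>' u' v'"
    and E: "\<And>x. norm (A x - A' x) \<le> e * norm x" and Et: "\<And>y. norm (At y - At' y) \<le> e * norm y"
    and e: "0 \<le> e" and r: "1 \<le> r" "r \<le> m" and gap: "\<sigma>' r < \<sigma> (r-1)"
  shows "onorm (\<lambda>z. prj u {..<r} (prj u' {r..<m} z)) \<le> e / (\<sigma> (r-1) - \<sigma>' r)"
    and "onorm (\<lambda>x. prj v {..<r} (prj v' {r..<m} x)) \<le> e / (\<sigma> (r-1) - \<sigma>' r)"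
proof -
  define s where "s = \<sigma> (r-1)"
  define t where "t = \<sigma>' r"
  define a where "a = onorm (\<lambda>z. prj u {..<r} (prj u' {r..<m} z))"
  define b where "b = onorm (\<lambda>x. prj v {..<r} (prj v' {r..<m} x))"
  have t0: "0 \<le> t" unfolding t_def by (rule svdlD(4)[OF A'])
  have st: "t < s" using gap unfolding s_def t_def .
  have s0: "0 < s" using t0 st by linarith
  have a0: "0 \<le> a" unfolding a_def by (rule onorm_pos_le[OF bounded_linear_compose[OF prj_bl prj_bl]])
  have b0: "0 \<le> b" unfolding b_def by (rule onorm_pos_le[OF bounded_linear_compose[OF prj_bl prj_bl]])
  have "a \<le> (b * t + e) / s"
    unfolding a_def
  proof (rule onorm_bound)
    show "0 \<le> (b * t + e) / s" using b0 t0 e s0 by simp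
    fix z
    have "s * norm (prj u {..<r} (prj u' {r..<m} z)) \<le> (b * t + e) * norm z"
      using half[OF At At' Et e r, of z] unfolding s_def t_def b_def .
    then show "norm (prj u {..<r} (prj u' {r..<m} z)) \<le> (b * t + e) / s * norm z"
      using s0 by (simp add: field_simps)
  qed
  then have ha: "s * a \<le> b * t + e" using s0 by (simp add: field_simps)
  have "b \<le> (a * t + e) / s"
    unfolding b_def
  proof (rule onorm_bound)
    show "0 \<le> (a * t + e) / s" using a0 t0 e s0 by simp
    fix z
    have "s * norm (prj v {..<r} (prj v' {r..<m} z)) \<le> (a * t + e) * norm z"
      using half[OF A A' E e r, of z] unfolding s_def t_def a_def .
    then show "norm (prj v {..<r} (prj v' {r..<m} z)) \<le> (a * t + e) / s * norm z"
      using s0 by (simp add: field_simps)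
  qed
  then have hb: "s * b \<le> a * t + e" using s0 by (simp add: field_simps)
  have "a \<le> e / (s - t) \<and> b \<le> e / (s - t)"
  proof (cases "b \<le> a")
    case True
    have "b * t \<le> a * t" using True t0 by (rule mult_right_mono)
    then have "a * (s - t) \<le> e" using ha by (simp add: algebra_simps)
    then have "a \<le> e / (s - t)" using st by (simp add: field_simps)
    then show ?thesis using True by simp
  next
    case False
    have "a * t \<le> b * t" using False t0 by (intro mult_right_mono) auto
    then have "b * (s - t) \<le> e" using hb by (simp add: algebra_simps)
    then have "b \<le> e / (s - t)" using st by (simp add: field_simps)
    then show ?thesis using False by simp
  qed
  then show "onorm (\<lambda>z. prj u {..<r} (prj u' {r..<m} z)) \<le> e / (\<sigma> (r-1) - \<sigma>' r)"
    and "onorm (\<lambda>x. prj v {..<r} (prj v' {r..<m} x)) \<le> e / (\<sigma> (r-1) - \<sigma>' r)"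
    unfolding a_def b_def s_def t_def by auto
qed

lemma weyl:
  fixes F F' :: "'a::euclidean_space \<Rightarrow> 'b::real_inner"
  assumes F: "svdl F m \<sigma> p q" and F': "svdl F' m \<sigma>' p' q'"
    and E: "\<And>x. norm (F x - F' x) \<le> e * norm x" and k: "k < m"
  shows "\<sigma> k - e \<le> \<sigma>' k"
proof -
  have op: "orthon m p" by (rule svdlD(1)[OF F])
  have op': "orthon m p'" by (rule svdlD(1)[OF F'])
  define S where "S = p ` {..k}"
  have pij: "p i \<bullet> p j = (if i = j then 1 else 0)" if "i \<le> k" "j \<le> k" for i j
    using op k that unfolding orthon_def by auto
  have inj: "inj_on p {..k}"
  proof (rule inj_onI)
    fix i j assume "i \<in> {..k}" "j \<in> {..k}" "p i = p j"
    then show "i = j" using pij[of i j] pij[of i i] by (auto split: if_splits)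
  qed
  have cardS: "card S = Suc k" unfolding S_def using card_image[OF inj] by simp
  have indep: "independent S"
  proof (rule pairwise_orthogonal_independent)
    show "pairwise orthogonal S"
      unfolding pairwise_def orthogonal_def S_def using pij by auto
    show "0 \<notin> S" unfolding S_def using pij by fastforce
  qed
  have dimS: "dim (span S) = Suc k" using dim_eq_card_independent[OF indep] cardS by simp
  define g where "g = prj p' {..<k}"
  have lg: "linear g" unfolding g_def by (rule bounded_linear.linear[OF prj_bl])
  have "\<exists>z\<in>span S. z \<noteq> 0 \<and> g z = 0"
  proof (rule ccontr)
    assume not: "\<not> ?thesis"
    have "inj_on g (span S)"
    proof (rule inj_onI)
      fix x y assume xy: "x \<in> span S" "y \<in> span S" "g x = g y"
      then have "g (x - y) = 0" using linear_diff[OF lg] by simp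
      moreover have "x - y \<in> span S" using xy by (intro span_diff)
      ultimately show "x = y" using not by auto
    qed
    then have "dim (g ` span S) = dim (span S)"
      using dim_image_eq[OF lg, of "span S"] by (simp add: span_span)
    moreover have "g ` span S \<subseteq> span (p' ` {..<k})"
    proof -
      have "prj p' {..<k} x \<in> span (p' ` {..<k})" for x
        unfolding prj_def by (intro span_sum span_scale span_base) simp
      then show ?thesis unfolding g_def by auto
    qed
    then have "dim (g ` span S) \<le> card (p' ` {..<k})" by (intro dim_le_card) auto
    moreover have "card (p' ` {..<k}) \<le> k" using card_image_le[of "{..<k}" p'] by simp
    ultimately show False using dimS by simp
  qed
  then obtain z where z: "z \<in> span S" "z \<noteq> 0" "g z = 0" by blast
  have "z \<bullet> g z = (\<Sum>i<k. (p' i \<bullet> z)\<^sup>2)"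
    unfolding g_def prj_def by (simp add: inner_sum_right power2_eq_square inner_commute)
  then have "(\<Sum>i<k. (p' i \<bullet> z)\<^sup>2) = 0" using z by simp
  then have orth: "p' i \<bullet> z = 0" if "i < k" for i
    using sum_nonneg_eq_0_iff[of "{..<k}" "\<lambda>i. (p' i \<bullet> z)\<^sup>2"] that by simp
  have Bk: "{k..<m} \<subseteq> {..<m}" by auto
  have "F' z = (\<Sum>i<m. (\<sigma>' i * (p' i \<bullet> z)) *\<^sub>R q' i)" by (rule svdlD(5)[OF F'])
  also have "\<dots> = (\<Sum>i\<in>{k..<m}. (\<sigma>' i * (p' i \<bullet> z)) *\<^sub>R q' i)"
    by (rule sum.mono_neutral_right) (auto simp: orth)
  also have "\<dots> = F' (prj p' {k..<m} z)" by (rule F_prj[OF F' Bk, symmetric])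
  finally have Fz: "F' z = F' (prj p' {k..<m} z)" .
  have "norm (F' z) \<le> \<sigma>' k * norm (prj p' {k..<m} z)"
    unfolding Fz by (rule F_upper[OF F' Bk]) (auto intro: svdlD(3)[OF F'])
  also have "\<dots> \<le> \<sigma>' k * norm z"
    by (rule mult_left_mono[OF prj_norm[OF op' Bk] svdlD(4)[OF F']])
  finally have up: "norm (F' z) \<le> \<sigma>' k * norm z" .
  have Ik: "{..k} \<subseteq> {..<m}" using k by auto
  have "(\<lambda>x. x - prj p {..k} x) z = 0"
  proof (rule linear_eq_0_on_span[OF _ _ z(1)])
    show "linear (\<lambda>x. x - prj p {..k} x)"
      by (intro linear_compose_sub bounded_linear.linear[OF bounded_linear_ident] bounded_linear.linear[OF prj_bl])
  next
    fix x assume "x \<in> S"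
    then obtain j where j: "j \<le> k" "x = p j" unfolding S_def by auto
    have "prj p {..k} (p j) = (\<Sum>i\<in>{..k}. (if i = j then 1 else 0) *\<^sub>R p i)"
      unfolding prj_def using j pij by (intro sum.cong) auto
    also have "\<dots> = (\<Sum>i\<in>{..k}. if i = j then p i else 0)" by (intro sum.cong) auto
    also have "\<dots> = p j" using j by (simp add: sum.delta')
    finally show "x - prj p {..k} x = 0" using j by simp
  qed
  then have zp: "z = prj p {..k} z" by simp
  have "\<sigma> k * norm z \<le> norm (F z)"
    by (subst (1 2) zp, rule F_lower[OF F Ik _ svdlD(4)[OF F]]) (auto intro: svdlD(3)[OF F])
  also have "\<dots> \<le> norm (F' z) + norm (F z - F' z)" by (rule norm_triangle_sub)
  also have "\<dots> \<le> \<sigma>' k * norm z + e * norm z" using up E[of z] by linarith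
  finally have "\<sigma> k * norm z \<le> (\<sigma>' k + e) * norm z" by (simp add: algebra_simps)
  then have "\<sigma> k \<le> \<sigma>' k + e" using z(2) by simp
  then show ?thesis by simp
qed

lemma adj_bound:
  assumes "\<And>x y. h y \<bullet> x = y \<bullet> f x" "\<And>x. norm (f x) \<le> e * norm x" "0 \<le> e"
  shows "norm (h y) \<le> e * norm y"
proof -
  have "norm (h y) * norm (h y) = h y \<bullet> h y"
    using power2_norm_eq_inner[of "h y"] by (simp add: power2_eq_square)
  also have "\<dots> = y \<bullet> f (h y)" by (rule assms(1))
  also have "\<dots> \<le> norm y * norm (f (h y))" by (rule norm_cauchy_schwarz)
  also have "\<dots> \<le> norm y * (e * norm (h y))" by (rule mult_left_mono[OF assms(2)]) simp
  finally have *: "norm (h y) * norm (h y) \<le> (e * norm y) * norm (h y)" by (simp add: mult_ac)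
  show ?thesis
  proof (cases "norm (h y) = 0")
    case True then show ?thesis using assms(3) by simp
  next
    case False then have "0 < norm (h y)" by simp
    then show ?thesis using * by (simp add: mult_le_cancel_right)
  qed
qed

lemma swap_bound:
  assumes bf: "bounded_linear f" and bg: "bounded_linear g"
    and sf: "\<And>a b. f a \<bullet> b = a \<bullet> f b" and sg: "\<And>a b. g a \<bullet> b = a \<bullet> g b"
  shows "norm (f (g x)) \<le> onorm (\<lambda>x. g (f x)) * norm x"
proof -
  define c where "c = onorm (\<lambda>x. g (f x))"
  have bl: "bounded_linear (\<lambda>x. g (f x))" by (rule bounded_linear_compose[OF bg bf])
  have c0: "0 \<le> c" unfolding c_def by (rule onorm_pos_le[OF bl])
  let ?y = "f (g x)"
  have "norm ?y * norm ?y = ?y \<bullet> ?y"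
    using power2_norm_eq_inner[of ?y] by (simp add: power2_eq_square)
  also have "\<dots> = g x \<bullet> f ?y" by (rule sf)
  also have "\<dots> = x \<bullet> g (f ?y)" by (rule sg)
  also have "\<dots> \<le> norm x * norm (g (f ?y))" by (rule norm_cauchy_schwarz)
  also have "\<dots> \<le> norm x * (c * norm ?y)" unfolding c_def by (rule mult_left_mono[OF onorm[OF bl]]) simp
  finally have *: "norm ?y * norm ?y \<le> (c * norm x) * norm ?y" by (simp add: mult_ac)
  show ?thesis
  proof (cases "norm ?y = 0")
    case True then show ?thesis using c0 unfolding c_def by simp
  next
    case False then have "0 < norm ?y" by simp
    then show ?thesis using * unfolding c_def by (simp add: mult_le_cancel_right)
  qed
qed

lemma prj_sa': "prj p I a \<bullet> b = a \<bullet> prj p I b"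
  by (rule prj_sa)

lemma is_svdD:
  fixes A :: "real^'n^'m"
  assumes "is_svd A \<sigma> u v"
  shows "orthon CARD('m) u" "orthon CARD('m) v" "\<And>i j. i \<le> j \<Longrightarrow> \<sigma> j \<le> \<sigma> i"
    "\<And>i. 0 \<le> \<sigma> i" "\<And>i. CARD('m) \<le> i \<Longrightarrow> \<sigma> i = 0"
    "A = (\<Sum>i<CARD('m). \<sigma> i *\<^sub>R outer (u i) (v i))"
  using assms unfolding is_svd_def orthon_def by blast+

lemma svd_fwd:
  fixes A :: "real^'n^'m"
  assumes "is_svd A \<sigma> u v"
  shows "svdl (\<lambda>x. A *v x) CARD('m) \<sigma> v u"
proof -
  have "A *v x = (\<Sum>i<CARD('m). (\<sigma> i * (v i \<bullet> x)) *\<^sub>R u i)" for x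
    by (subst is_svdD(6)[OF assms]) (simp add: sum_mv scaleR_mv outer_mv)
  then show ?thesis unfolding svdl_def
    using is_svdD(1-4)[OF assms] by blast
qed

lemma svd_bwd:
  fixes A :: "real^'n^'m"
  assumes "is_svd A \<sigma> u v"
  shows "svdl (\<lambda>y. \<Sum>i<CARD('m). (\<sigma> i * (u i \<bullet> y)) *\<^sub>R v i) CARD('m) \<sigma> u v"
  unfolding svdl_def using is_svdD(1-4)[OF assms] by blast

lemma svd_adj:
  fixes A :: "real^'n^'m"
  assumes "is_svd A \<sigma> u v"
  shows "(\<Sum>i<CARD('m). (\<sigma> i * (u i \<bullet> y)) *\<^sub>R v i) \<bullet> x = y \<bullet> (A *v x)"
proof -
  have "A *v x = (\<Sum>i<CARD('m). (\<sigma> i * (v i \<bullet> x)) *\<^sub>R u i)"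
    using svdlD(5)[OF svd_fwd[OF assms]] .
  then show ?thesis
    by (simp add: inner_sum_left inner_sum_right inner_commute mult.commute mult.left_commute)
qed

lemma span_prj:
  assumes op: "orthon m p" and I: "I \<subseteq> {..<m}" and x: "x \<in> span (p ` I)"
  shows "prj p I x = x"
proof -
  have "(\<lambda>x. x - prj p I x) x = 0"
  proof (rule linear_eq_0_on_span[OF _ _ x])
    show "linear (\<lambda>x. x - prj p I x)"
      by (intro linear_compose_sub bounded_linear.linear[OF bounded_linear_ident] bounded_linear.linear[OF prj_bl])
  next
    fix y assume "y \<in> p ` I"
    then obtain j where j: "j \<in> I" "y = p j" by auto
    have pij: "p i \<bullet> p j = (if i = j then 1 else 0)" if "i \<in> I" for i
    proof -
      have "i < m" "j < m" using I j that by auto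
      then show ?thesis using op unfolding orthon_def by auto
    qed
    have fin: "finite I" using I finite_subset by blast
    have "prj p I (p j) = (\<Sum>i\<in>I. (if i = j then 1 else 0) *\<^sub>R p i)"
      unfolding prj_def using pij by (intro sum.cong) auto
    also have "\<dots> = (\<Sum>i\<in>I. if i = j then p i else 0)" by (intro sum.cong) auto
    also have "\<dots> = p j" using j fin by (simp add: sum.delta')
    finally show "y - prj p I y = 0" using j by simp
  qed
  then show ?thesis by simp
qed

lemma complete:
  fixes p :: "nat \<Rightarrow> real^'m"
  assumes op: "orthon CARD('m) p"
  shows "prj p {..<CARD('m)} x = x"
proof -
  define S where "S = p ` {..<CARD('m)}"
  have pij: "p i \<bullet> p j = (if i = j then 1 else 0)" if "i < CARD('m)" "j < CARD('m)" for i j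
    using op that unfolding orthon_def by auto
  have inj: "inj_on p {..<CARD('m)}"
  proof (rule inj_onI)
    fix i j assume "i \<in> {..<CARD('m)}" "j \<in> {..<CARD('m)}" "p i = p j"
    then show "i = j" using pij[of i j] pij[of i i] by (auto split: if_splits)
  qed
  have cardS: "card S = CARD('m)" unfolding S_def using card_image[OF inj] by simp
  have indep: "independent S"
  proof (rule pairwise_orthogonal_independent)
    show "pairwise orthogonal S"
      unfolding pairwise_def orthogonal_def S_def using pij by auto
    show "0 \<notin> S" unfolding S_def using pij by fastforce
  qed
  have "UNIV \<subseteq> span S"
    by (rule card_ge_dim_independent[OF _ indep]) (simp_all add: cardS)
  then have "x \<in> span S" by blast
  then show ?thesis unfolding S_def by (rule span_prj[OF op order.refl])
qed

lemma prj_split: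
  assumes "r \<le> m"
  shows "prj p {..<m} x = prj p {..<r} x + prj p {r..<m} x"
proof -
  have eq: "{..<m} = {..<r} \<union> {r..<m}" using assms by auto
  have "prj p ({..<r} \<union> {r..<m}) x = prj p {..<r} x + prj p {r..<m} x"
    unfolding prj_def by (rule sum.union_disjoint) auto
  then show ?thesis by (subst eq)
qed

lemma proj_mv: "proj u r *v x = prj u {..<r} x"
  unfolding proj_def prj_def by (simp add: sum_mv outer_mv inner_commute)

theorem lemma6:
  fixes Mstar E :: "real^'n^'m"
    and \<sigma>s \<sigma> :: "nat \<Rightarrow> real"
    and us u :: "nat \<Rightarrow> real^'m"
    and vs v :: "nat \<Rightarrow> real^'n"
    and r :: nat
  assumes "CARD('m) \<le> CARD('n)"
    and "is_svd Mstar \<sigma>s us vs"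
    and "is_svd (Mstar + E) \<sigma> u v"
    and "1 \<le> r" and "r \<le> CARD('m)"
    and "\<sigma>s (r - 1) - \<sigma>s r > 2 * spec_norm E"
  shows "spec_norm ((proj u r - proj us r) ** Mstar)
           \<le> 4 * \<sigma>s (r - 1) * spec_norm E / (\<sigma>s (r - 1) - \<sigma>s r)"
proof -
  note svs = assms(2) and sv = assms(3) and r = assms(4,5) and gap = assms(6)
  define m where "m = CARD('m)"
  define e where "e = spec_norm E"
  define T where "T = {..<r}"
  define B where "B = {r..<m}"
  have T: "T \<subseteq> {..<m}" using r unfolding T_def m_def by auto
  have B: "B \<subseteq> {..<m}" unfolding B_def by auto
  define Ms where "Ms = (\<lambda>x. Mstar *v x)"
  define Mf where "Mf = (\<lambda>x. (Mstar + E) *v x)"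
  define Mst where "Mst = (\<lambda>y. \<Sum>i<m. (\<sigma>s i * (us i \<bullet> y)) *\<^sub>R vs i)"
  define Mt where "Mt = (\<lambda>y. \<Sum>i<m. (\<sigma> i * (u i \<bullet> y)) *\<^sub>R v i)"
  have sMs: "svdl Ms m \<sigma>s vs us" unfolding Ms_def m_def by (rule svd_fwd[OF svs])
  have sMst: "svdl Mst m \<sigma>s us vs" unfolding Mst_def m_def by (rule svd_bwd[OF svs])
  have sM: "svdl Mf m \<sigma> v u" unfolding Mf_def m_def by (rule svd_fwd[OF sv])
  have sMt: "svdl Mt m \<sigma> u v" unfolding Mt_def m_def by (rule svd_bwd[OF sv])
  have e0: "0 \<le> e" unfolding e_def spec_norm_def by (rule onorm_pos_le[OF matrix_vector_mul_bounded_linear])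
  have Eb: "norm (E *v x) \<le> e * norm x" for x
    unfolding e_def spec_norm_def by (rule onorm[OF matrix_vector_mul_bounded_linear])
  have MfE: "Mf x = Ms x + E *v x" for x
    unfolding Mf_def Ms_def by (simp add: matrix_vector_mult_add_rdistrib)
  have d1: "norm (Mf x - Ms x) \<le> e * norm x" for x using Eb[of x] by (simp add: MfE)
  have d2: "norm (Ms x - Mf x) \<le> e * norm x" for x using d1[of x] by (simp add: norm_minus_commute)
  have adj: "(Mt y - Mst y) \<bullet> x = y \<bullet> (E *v x)" for x y
  proof -
    have "Mt y \<bullet> x = y \<bullet> Mf x" unfolding Mt_def Mf_def m_def by (rule svd_adj[OF sv])
    moreover have "Mst y \<bullet> x = y \<bullet> Ms x" unfolding Mst_def Ms_def m_def by (rule svd_adj[OF svs])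
    ultimately show ?thesis by (simp add: inner_diff_left MfE inner_add_right)
  qed
  have d3: "norm (Mt y - Mst y) \<le> e * norm y" for y
    by (rule adj_bound[where f = "\<lambda>x. E *v x", OF adj Eb e0])
  have d4: "norm (Mst y - Mt y) \<le> e * norm y" for y using d3[of y] by (simp add: norm_minus_commute)
  have w1: "\<sigma>s (r-1) - e \<le> \<sigma> (r-1)"
    by (rule weyl[OF sMs sM d2]) (use r in \<open>simp add: m_def\<close>)
  have w2: "\<sigma> r \<le> \<sigma>s r + e"
  proof (cases "r < m")
    case True
    have "\<sigma> r - e \<le> \<sigma>s r" by (rule weyl[OF sM sMs d1 True])
    then show ?thesis by simp
  next
    case False
    then have "\<sigma> r = 0" using is_svdD(5)[OF sv, of r] unfolding m_def by simp
    then show ?thesis using e0 svdlD(4)[OF sMs, of r] by simp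
  qed
  define t where "t = \<sigma>s r"
  define \<delta> where "\<delta> = \<sigma>s (r-1) - \<sigma>s r"
  have t0: "0 \<le> t" unfolding t_def by (rule svdlD(4)[OF sMs])
  have gap': "2 * e < \<delta>" using gap unfolding \<delta>_def e_def .
  define K where "K = e / (\<delta> - e)"
  have de: "0 < \<delta> - e" using gap' e0 by linarith
  have K0: "0 \<le> K" unfolding K_def using e0 de by simp
  have g1: "\<sigma>s r < \<sigma> (r-1)" using w1 gap' e0 unfolding \<delta>_def by linarith
  have a: "onorm (\<lambda>z. prj u {..<r} (prj us {r..<m} z)) \<le> e / (\<sigma> (r-1) - \<sigma>s r)"
    by (rule sintheta(1)[OF sM sMt sMs sMst d1 d3 e0 r(1) r(2)[folded m_def] g1])
  have g2: "\<sigma> r < \<sigma>s (r-1)" using w2 gap' e0 unfolding \<delta>_def by linarith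
  have b: "onorm (\<lambda>x. prj vs {..<r} (prj v {r..<m} x)) \<le> e / (\<sigma>s (r-1) - \<sigma> r)"
    by (rule sintheta(2)[OF sMs sMst sM sMt d2 d4 e0 r(1) r(2)[folded m_def] g2])
  have aK: "onorm (\<lambda>z. prj u T (prj us B z)) \<le> K"
  proof -
    have "e / (\<sigma> (r-1) - \<sigma>s r) \<le> e / (\<delta> - e)"
      using w1 de e0 unfolding \<delta>_def by (intro divide_left_mono) auto
    then show ?thesis using a unfolding K_def T_def B_def by linarith
  qed
  have bK: "onorm (\<lambda>x. prj vs T (prj v B x)) \<le> K"
  proof -
    have "e / (\<sigma>s (r-1) - \<sigma> r) \<le> e / (\<delta> - e)"
      using w2 de e0 unfolding \<delta>_def by (intro divide_left_mono) auto
    then show ?thesis using b unfolding K_def T_def B_def by linarith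
  qed
  define C where "C = K * t + (t + e) * K + e"
  have C_le: "C \<le> 4 * \<sigma>s (r - 1) * e / \<delta>"
  proof -
    have dpos: "0 < \<delta>" using gap' e0 by linarith
    have h: "e * \<delta> \<le> 2 * e * (\<delta> - e)"
      using mult_nonneg_nonneg[OF e0, of "\<delta> - 2*e"] gap' by (simp add: algebra_simps)
    have K2: "K \<le> 2 * e / \<delta>"
      unfolding K_def using h dpos de by (simp add: field_simps)
    have "C = K * (2 * t + e) + e" unfolding C_def by (simp add: algebra_simps)
    also have "\<dots> \<le> (2 * e / \<delta>) * (2 * t + e) + e"
      using K2 t0 e0 by (intro add_right_mono mult_right_mono) auto
    also have "\<dots> = (4 * t * e + 2 * e * e) / \<delta> + e" by (simp add: field_simps)
    also have "\<dots> \<le> (4 * t * e + \<delta> * e) / \<delta> + e"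
    proof -
      have "2 * e * e \<le> \<delta> * e" using mult_right_mono[of "2*e" \<delta> e] gap' e0 by simp
      then show ?thesis using dpos by (intro add_right_mono divide_right_mono) auto
    qed
    also have "\<dots> = 4 * t * e / \<delta> + 2 * e" using dpos by (simp add: field_simps)
    also have "\<dots> \<le> 4 * t * e / \<delta> + 4 * e" using e0 by simp
    also have "\<dots> = 4 * (t + \<delta>) * e / \<delta>" using dpos by (simp add: field_simps)
    also have "t + \<delta> = \<sigma>s (r-1)" unfolding t_def \<delta>_def by simp
    finally show ?thesis .
  qed
  have main: "norm (((proj u r - proj us r) ** Mstar) *v x) \<le> C * norm x" for x
  proof -
    define w where "w = Mstar *v x"
    have "((proj u r - proj us r) ** Mstar) *v x = prj u T w - prj us T w"
      unfolding w_def T_def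
      by (simp add: matrix_vector_mul_assoc[symmetric] matrix_vector_mult_diff_rdistrib proj_mv)
    also have "\<dots> = prj u T (prj us B w) - prj u B (prj us T w)"
    proof -
      have c1: "w = prj us T w + prj us B w"
        using complete[OF is_svdD(1)[OF svs], of w] prj_split[OF r(2), of us w]
        unfolding T_def B_def m_def by simp
      have c2: "prj us T w = prj u T (prj us T w) + prj u B (prj us T w)"
        using complete[OF is_svdD(1)[OF sv], of "prj us T w"] prj_split[OF r(2), of u "prj us T w"]
        unfolding T_def B_def m_def by simp
      have "prj u T w = prj u T (prj us T w) + prj u T (prj us B w)"
        by (subst c1) (rule linear_add[OF bounded_linear.linear[OF prj_bl]])
      then show ?thesis using c2 by (simp add: algebra_simps)
    qed
    finally have split: "((proj u r - proj us r) ** Mstar) *v x = prj u T (prj us B w) - prj u B (prj us T w)" .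
    have wB: "prj us B w = Ms (prj vs B x)"
      unfolding w_def Ms_def[symmetric] by (rule F_prj_comm[OF sMs B, symmetric])
    have "norm (prj u T (prj us B w)) = norm (prj u T (prj us B (prj us B w)))"
      by (simp add: prj_idem[OF svdlD(2)[OF sMs] B])
    also have "\<dots> \<le> onorm (\<lambda>z. prj u T (prj us B z)) * norm (prj us B w)"
      by (rule onorm[OF bounded_linear_compose[OF prj_bl prj_bl]])
    also have "\<dots> \<le> K * norm (prj us B w)" by (rule mult_right_mono[OF aK]) simp
    also have "norm (prj us B w) \<le> t * norm x"
    proof -
      have "norm (prj us B w) \<le> t * norm (prj vs B x)" unfolding wB t_def
        by (rule F_upper[OF sMs B]) (auto simp: B_def intro: svdlD(3)[OF sMs])
      also have "\<dots> \<le> t * norm x" by (rule mult_left_mono[OF prj_norm[OF svdlD(1)[OF sMs] B] t0])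
      finally show ?thesis .
    qed
    then have "K * norm (prj us B w) \<le> K * (t * norm x)" by (rule mult_left_mono[OF _ K0])
    finally have tA: "norm (prj u T (prj us B w)) \<le> K * t * norm x" by (simp add: mult_ac)
    define x' where "x' = prj vs T x"
    have wT: "prj us T w = Ms x'"
      unfolding w_def x'_def Ms_def[symmetric] by (rule F_prj_comm[OF sMs T, symmetric])
    have "prj u B (prj us T w) = prj u B (Mf x') - prj u B (E *v x')"
      unfolding wT using MfE[of x'] linear_diff[OF bounded_linear.linear[OF prj_bl], of u B "Mf x'" "E *v x'"] by simp
    also have "prj u B (Mf x') = Mf (prj v B x')" by (rule F_prj_comm[OF sM B, symmetric])
    finally have eqB: "prj u B (prj us T w) = Mf (prj v B x') - prj u B (E *v x')" .
    have "norm (Mf (prj v B x')) \<le> \<sigma> r * norm (prj v B x')"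
      by (rule F_upper[OF sM B]) (auto simp: B_def intro: svdlD(3)[OF sM])
    also have "norm (prj v B x') \<le> K * norm x"
    proof -
      have "norm (prj v B (prj vs T x)) \<le> onorm (\<lambda>x. prj vs T (prj v B x)) * norm x"
        by (rule swap_bound[OF prj_bl prj_bl prj_sa prj_sa])
      also have "\<dots> \<le> K * norm x" by (rule mult_right_mono[OF bK]) simp
      finally show ?thesis unfolding x'_def .
    qed
    then have "\<sigma> r * norm (prj v B x') \<le> \<sigma> r * (K * norm x)"
      by (rule mult_left_mono) (rule svdlD(4)[OF sM])
    also have "\<dots> \<le> (t + e) * (K * norm x)"
      using w2 K0 unfolding t_def by (intro mult_right_mono) auto
    finally have tB1: "norm (Mf (prj v B x')) \<le> (t + e) * K * norm x" by (simp add: mult_ac)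
    have "norm (prj u B (E *v x')) \<le> norm (E *v x')" by (rule prj_norm[OF svdlD(2)[OF sM] B])
    also have "\<dots> \<le> e * norm x'" by (rule Eb)
    also have "\<dots> \<le> e * norm x" unfolding x'_def
      by (rule mult_left_mono[OF prj_norm[OF svdlD(1)[OF sMs] T] e0])
    finally have tB2: "norm (prj u B (E *v x')) \<le> e * norm x" .
    have "norm (((proj u r - proj us r) ** Mstar) *v x)
        \<le> norm (prj u T (prj us B w)) + norm (Mf (prj v B x')) + norm (prj u B (E *v x'))"
      unfolding split eqB
      using norm_triangle_ineq4[of "prj u T (prj us B w)" "Mf (prj v B x') - prj u B (E *v x')"]
        norm_triangle_ineq4[of "Mf (prj v B x')" "prj u B (E *v x')"] by linarith
    also have "\<dots> \<le> K * t * norm x + (t + e) * K * norm x + e * norm x"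
      using tA tB1 tB2 by linarith
    also have "\<dots> = C * norm x" unfolding C_def by (simp add: algebra_simps)
    finally show ?thesis .
  qed
  have "spec_norm ((proj u r - proj us r) ** Mstar) \<le> 4 * \<sigma>s (r - 1) * e / \<delta>"
    unfolding spec_norm_def
  proof (rule onorm_bound)
    show "0 \<le> 4 * \<sigma>s (r - 1) * e / \<delta>"
      using e0 gap' svdlD(4)[OF sMs, of "r-1"] by simp
    fix x
    show "norm (((proj u r - proj us r) ** Mstar) *v x) \<le> 4 * \<sigma>s (r - 1) * e / \<delta> * norm x"
      using main[of x] mult_right_mono[OF C_le norm_ge_zero[of x]] by linarith
  qed
  then show ?thesis unfolding e_def \<delta>_def .
qed

end
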